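(* Consider a black-white array (BWA) storing at most $n=2^m-1$ values, and average the cost of searching for a value not present in it over the $n$ possible configurations $\mathtt{total}\in\{1,\dots,n\}$. This average time is $O(\log^2 n)$.
   Context: A black-white array (BWA) of size $N=2^K$ stores values from a totally ordered set. Its white array is $W[1..N-1]$. For $i\ge0$, the segment of rank $i$ is the index block $[2^i,2^{i+1}-1]$, of length $2^i$. A state variable $\mathtt{total}$ counts stored values. The rank-$i$ segment is active iff bit $i$ of $\mathtt{total}$ is $1$; thus the configuration of the BWA is determined by $\mathtt{total}$. Between operations, all stored values lie in the active white segments, each sorted ascending. Search$(v)$: for $i=K-1$ down to $0$, if the rank-$i$ segment is active, binary-search the white rank-$i$ segment for $v$. A binary search of a segment of length $L$ costs $O(\log L+1)$. Return the index at the first success, or Nil if none. An unsuccessful search therefore binary-searches every active segment. *)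

theory Defs
  imports Complex_Main "HOL-Library.Landau_Symbols"
begin

text \<open>BWA of size N = 2^K. The rank-i segment is active iff bit i of tot is 1.\<close>
definition seg_active :: "nat \<Rightarrow> nat \<Rightarrow> bool" where
  "seg_active tot i = bit tot i"

text \<open>Cost of an unsuccessful search in a BWA of size 2^K with the given total:
  every active segment (of length 2^i) is binary-searched; bs L is the cost
  of one binary search of a segment of length L.\<close>
definition unsucc_search_cost :: "(nat \<Rightarrow> real) \<Rightarrow> nat \<Rightarrow> nat \<Rightarrow> real" where
  "unsucc_search_cost bs K tot = (\<Sum>i \<in> {i. i < K \<and> seg_active tot i}. bs (2 ^ i))"

definition avg_unsucc_cost :: "(nat \<Rightarrow> real) \<Rightarrow> nat \<Rightarrow> real" where
  "avg_unsucc_cost bs m =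
     (\<Sum>t = 1..2 ^ m - 1. unsucc_search_cost bs m t) / real (2 ^ m - 1)"

end

theory Submission
  imports Defs
begin

lemma cost_bound:
  fixes bs :: "nat \<Rightarrow> real" and C :: real
  assumes A: "\<forall>L\<ge>1. 0 \<le> bs L \<and> bs L \<le> C * (log 2 (real L) + 1)"
  shows "0 \<le> unsucc_search_cost bs m t \<and> unsucc_search_cost bs m t \<le> C * real m ^ 2"
proof -
  have S: "{i. i < m \<and> seg_active t i} \<subseteq> {..<m}" by auto
  have nn: "\<And>i. 0 \<le> bs (2^i)" using A by simp
  have le: "\<And>i. i < m \<Longrightarrow> bs (2^i) \<le> C * real m"
  proof -
    fix i assume "i < m"
    have C0: "0 \<le> C" using A[rule_format, of 1] by simp
    have "bs (2^i) \<le> C * (log 2 (real ((2::nat)^i)) + 1)" using A[rule_format, of "2^i"] by simp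
    also have "log 2 (real (2^i)) = real i" by (simp add: log_nat_power)
    also have "C * (real i + 1) \<le> C * real m" using \<open>i < m\<close> C0
      by (intro mult_left_mono) auto
    finally show "bs (2^i) \<le> C * real m" by simp
  qed
  have "unsucc_search_cost bs m t \<le> (\<Sum>i<m. bs (2^i))"
    unfolding unsucc_search_cost_def by (rule sum_mono2) (use S nn in auto)
  also have "\<dots> \<le> (\<Sum>i<m. C * real m)" by (rule sum_mono) (use le in auto)
  also have "\<dots> = C * real m ^ 2" by (simp add: power2_eq_square)
  finally show ?thesis unfolding unsucc_search_cost_def using nn
    by (auto intro: sum_nonneg)
qed

theorem mainTheorem10:
  fixes bs :: "nat \<Rightarrow> real" and C :: real
  assumes "\<forall>L\<ge>1. 0 \<le> bs L \<and> bs L \<le> C * (log 2 (real L) + 1)"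
  shows "(\<lambda>m. avg_unsucc_cost bs m) \<in> O(\<lambda>m. (log 2 (real (2 ^ m - 1))) ^ 2)"
proof (rule bigoI[where c = "4 * C"])
  have C0: "0 \<le> C" using assms[rule_format, of 1] by simp
  show "eventually (\<lambda>m. norm (avg_unsucc_cost bs m) \<le> 4 * C * norm ((log 2 (real (2 ^ m - 1))) ^ 2)) at_top"
    unfolding eventually_at_top_linorder
  proof (intro exI allI impI)
    fix m :: nat assume m: "m \<ge> 2"
    have "(4::nat) \<le> 2 ^ m" using power_increasing[OF m, of "2::nat"] by simp
    hence pos: "(2::nat) ^ m - 1 \<ge> 1" by linarith
    have sn: "0 \<le> (\<Sum>t = 1..2 ^ m - 1. unsucc_search_cost bs m t)"
      by (rule sum_nonneg) (use cost_bound[OF assms] in blast)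
    have "(\<Sum>t = 1..2 ^ m - 1. unsucc_search_cost bs m t) \<le> (\<Sum>t = 1..(2::nat) ^ m - 1. C * real m ^ 2)"
      by (rule sum_mono) (use cost_bound[OF assms] in blast)
    also have "\<dots> = real (2^m - 1) * (C * real m ^ 2)" by simp
    finally have SD: "(\<Sum>t = 1..2 ^ m - 1. unsucc_search_cost bs m t) \<le> real (2^m - 1) * (C * real m ^ 2)" .
    have D: "real ((2::nat)^m - 1) > 0" using pos by linarith
    have avg: "avg_unsucc_cost bs m \<le> C * real m ^ 2"
      unfolding avg_unsucc_cost_def using SD D by (subst pos_divide_le_eq) (auto simp: mult.commute simp del: of_nat_diff)
    have avg0: "0 \<le> avg_unsucc_cost bs m"
      unfolding avg_unsucc_cost_def using sn D by (intro divide_nonneg_pos) (auto simp del: of_nat_diff)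
    have p2: "(2::nat) ^ (m - 1) \<le> 2 ^ m - 1"
    proof -
      obtain k where k: "m = Suc k" using m by (cases m) auto
      have "(1::nat) \<le> 2 ^ k" by simp
      thus ?thesis using k by simp
    qed
    have "real (m - 1) = log 2 (real ((2::nat) ^ (m - 1)))" by (simp add: log_nat_power)
    also have "\<dots> \<le> log 2 (real (2 ^ m - 1))"
    proof -
      have r: "real ((2::nat) ^ (m - 1)) \<le> real ((2::nat) ^ m - 1)" using p2 by (simp only: of_nat_le_iff)
      have "real ((2::nat) ^ (m - 1)) > 0" by (simp only: of_nat_0_less_iff) simp
      thus ?thesis using r by (intro log_mono) auto
    qed
    finally have lg: "real m - 1 \<le> log 2 (real (2 ^ m - 1))" using m by simp
    have "real m \<le> 2 * (real m - 1)" using m by simp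
    also have "\<dots> \<le> 2 * log 2 (real (2 ^ m - 1))" using lg by simp
    finally have "real m ^ 2 \<le> (2 * log 2 (real (2 ^ m - 1)))^2"
      by (rule power_mono) simp
    hence "C * real m ^ 2 \<le> C * (4 * (log 2 (real (2 ^ m - 1)))^2)"
      using C0 by (intro mult_left_mono) (auto simp: power_mult_distrib)
    thus "norm (avg_unsucc_cost bs m) \<le> 4 * C * norm ((log 2 (real (2 ^ m - 1))) ^ 2)"
      using avg avg0 by simp
  qed
qed

end
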